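(* If $Q$ is a Jordan loop of order $9$ and $x\in Q$ satisfies $\langle x\rangle=Q$, then $Q=\{x^k:1\le k\le 9\}$ and $x^n=x^{(n\bmod 9)}$ for all integers $n\ge 0$.
   Context: A loop is a set $Q$ with a binary operation (juxtaposition) and neutral element $e$ such that for all $a,b$ the equations $ax=b$, $ya=b$ have unique solutions. A Jordan loop is a commutative loop satisfying $x^2(yx)=(x^2y)x$. For $k\ge 0$, $x^k$ denotes the right-associated product $x(x(\cdots(xe)\cdots))$ with $k$ factors $x$ (so $x^0=e$). $\langle x\rangle$ denotes the subloop generated by $x$. *)

theory Defs
  imports Main
begin

definition loop :: "'a set \<Rightarrow> ('a \<Rightarrow> 'a \<Rightarrow> 'a) \<Rightarrow> 'a \<Rightarrow> bool" where
  "loop Q m e \<longleftrightarrow> e \<in> Q \<and> (\<forall>a\<in>Q. \<forall>b\<in>Q. m a b \<in> Q)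
     \<and> (\<forall>a\<in>Q. m e a = a \<and> m a e = a)
     \<and> (\<forall>a\<in>Q. \<forall>b\<in>Q. (\<exists>!x. x \<in> Q \<and> m a x = b) \<and> (\<exists>!y. y \<in> Q \<and> m y a = b))"

definition jordan_loop :: "'a set \<Rightarrow> ('a \<Rightarrow> 'a \<Rightarrow> 'a) \<Rightarrow> 'a \<Rightarrow> bool" where
  "jordan_loop Q m e \<longleftrightarrow> loop Q m e
     \<and> (\<forall>a\<in>Q. \<forall>b\<in>Q. m a b = m b a)
     \<and> (\<forall>x\<in>Q. \<forall>y\<in>Q. m (m x x) (m y x) = m (m (m x x) y) x)"

primrec lpow :: "('a \<Rightarrow> 'a \<Rightarrow> 'a) \<Rightarrow> 'a \<Rightarrow> 'a \<Rightarrow> nat \<Rightarrow> 'a" where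
  "lpow m e x 0 = e"
| "lpow m e x (Suc k) = m x (lpow m e x k)"

definition subloop :: "'a set \<Rightarrow> ('a \<Rightarrow> 'a \<Rightarrow> 'a) \<Rightarrow> 'a \<Rightarrow> 'a set \<Rightarrow> bool" where
  "subloop Q m e H \<longleftrightarrow> H \<subseteq> Q \<and> e \<in> H \<and> (\<forall>a\<in>H. \<forall>b\<in>H. m a b \<in> H)
     \<and> (\<forall>a\<in>H. \<forall>b\<in>H. \<forall>x\<in>Q. m a x = b \<longrightarrow> x \<in> H)
     \<and> (\<forall>a\<in>H. \<forall>b\<in>H. \<forall>y\<in>Q. m y a = b \<longrightarrow> y \<in> H)"

definition gen_subloop :: "'a set \<Rightarrow> ('a \<Rightarrow> 'a \<Rightarrow> 'a) \<Rightarrow> 'a \<Rightarrow> 'a \<Rightarrow> 'a set" where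
  "gen_subloop Q m e x = \<Inter>{H. subloop Q m e H \<and> x \<in> H}"

end

theory Submission imports Defs begin

lemma inv_even:
  "finite A \<Longrightarrow> (\<forall>a\<in>A. f a \<in> A \<and> f a \<noteq> a \<and> f (f a) = a) \<Longrightarrow> even (card A)"
proof (induction "card A" arbitrary: A rule: less_induct)
  case less
  show ?case
  proof (cases "A = {}")
    case True then show ?thesis by simp
  next
    case False
    then obtain a where a: "a \<in> A" by blast
    define B where "B = A - {a, f a}"
    have fa: "f a \<in> A" "f a \<noteq> a" using less.prems a by auto
    have cB: "card B = card A - 2" unfolding B_def using fa a less.prems(1)
      by (simp add: card_Diff_subset)
    have cA: "card A \<ge> 2"
    proof -
      have "{a, f a} \<subseteq> A" using a fa by auto
      hence "card {a, f a} \<le> card A" using less.prems(1) by (simp add: card_mono)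
      thus ?thesis using fa by simp
    qed
    have "even (card B)"
    proof (rule less.hyps)
      show "card B < card A" using cB cA by simp
      show "finite B" unfolding B_def using less.prems(1) by simp
      show "\<forall>b\<in>B. f b \<in> B \<and> f b \<noteq> b \<and> f (f b) = b"
        unfolding B_def
      proof
        fix b assume b: "b \<in> A - {a, f a}"
        have h: "f b \<in> A" "f b \<noteq> b" "f (f b) = b" "f (f a) = a" using less.prems(2) a b by auto
        have "f b \<noteq> a" using h b by auto
        moreover have "f b \<noteq> f a"
        proof
          assume "f b = f a" hence "f (f b) = f (f a)" by simp
          hence "b = a" using h by simp
          with b show False by simp
        qed
        ultimately show "f b \<in> A - {a, f a} \<and> f b \<noteq> b \<and> f (f b) = b" using h by auto
      qed
    qed
    moreover have "card A = card B + 2" using cB cA by simp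
    ultimately show ?thesis by simp
  qed
qed


locale JL = fixes Q m e assumes J: "jordan_loop Q m e"
begin

lemma e_in: "e \<in> Q" using J unfolding jordan_loop_def loop_def by blast
lemma cl: "a\<in>Q \<Longrightarrow> b\<in>Q \<Longrightarrow> m a b \<in> Q" using J unfolding jordan_loop_def loop_def by blast
lemma lid: "a\<in>Q \<Longrightarrow> m e a = a" using J unfolding jordan_loop_def loop_def by blast
lemma rid: "a\<in>Q \<Longrightarrow> m a e = a" using J unfolding jordan_loop_def loop_def by blast
lemma comm: "a\<in>Q \<Longrightarrow> b\<in>Q \<Longrightarrow> m a b = m b a" using J unfolding jordan_loop_def by blast
lemma jor: "z\<in>Q \<Longrightarrow> y\<in>Q \<Longrightarrow> m (m z z) (m y z) = m (m (m z z) y) z"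
  using J unfolding jordan_loop_def by blast
lemma ldiv_ex: assumes "a\<in>Q" "b\<in>Q" shows "\<exists>!x. x \<in> Q \<and> m a x = b"
proof -
  have "loop Q m e" using J by (simp add: jordan_loop_def)
  hence "\<forall>a\<in>Q. \<forall>b\<in>Q. (\<exists>!x. x \<in> Q \<and> m a x = b) \<and> (\<exists>!y. y \<in> Q \<and> m y a = b)"
    by (simp add: loop_def)
  from this[rule_format, OF assms] show ?thesis by (rule conjunct1)
qed
lemma lcanc: assumes "a\<in>Q" "b\<in>Q" "c\<in>Q" "m a b = m a c" shows "b = c"
proof -
  have "\<exists>!x. x \<in> Q \<and> m a x = m a b" using ldiv_ex assms cl by blast
  then obtain x0 where "\<forall>y. y \<in> Q \<and> m a y = m a b \<longrightarrow> y = x0" by blast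
  then have "b = x0" "c = x0" using assms by auto
  thus ?thesis by simp
qed
lemma rcanc: assumes "a\<in>Q" "b\<in>Q" "c\<in>Q" "m b a = m c a" shows "b = c"
  using lcanc[of a b c] assms comm by metis
lemma jor2: "z\<in>Q \<Longrightarrow> y\<in>Q \<Longrightarrow> m (m z z) (m z y) = m z (m (m z z) y)"
  using jor[of z y] comm cl by metis

lemma sq_surj:
  assumes fin: "finite Q" and odd: "odd (card Q)" and w: "w \<in> Q"
  shows "\<exists>a\<in>Q. m a a = w"
proof -
  define S where "S = {(a,b). a\<in>Q \<and> b\<in>Q \<and> m a b = w}"
  have "bij_betw fst S Q"
    unfolding bij_betw_def
  proof
    show "inj_on fst S" unfolding S_def inj_on_def using lcanc by fastforce
    show "fst ` S = Q"
    proof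
      show "fst ` S \<subseteq> Q" unfolding S_def by auto
      show "Q \<subseteq> fst ` S"
      proof
        fix a assume a: "a \<in> Q"
        have "\<exists>!x. x \<in> Q \<and> m a x = w" using ldiv_ex a w by blast
        then obtain b where "b\<in>Q" "m a b = w" by blast
        hence "(a,b) \<in> S" unfolding S_def using a by simp
        thus "a \<in> fst ` S" by force
      qed
    qed
  qed
  hence cS: "card S = card Q" by (rule bij_betw_same_card)
  have "S \<subseteq> Q \<times> Q" unfolding S_def by auto
  hence finS: "finite S" using fin finite_subset by blast
  define D where "D = {p\<in>S. fst p = snd p}"
  define N where "N = {p\<in>S. fst p \<noteq> snd p}"
  have "S = D \<union> N" "D \<inter> N = {}" unfolding D_def N_def by auto
  hence "card S = card D + card N" using finS
    by (metis card_Un_disjoint finite_Un)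
  moreover have "even (card N)"
  proof (rule inv_even[where f = "\<lambda>(a,b). (b,a)"])
    show "finite N" unfolding N_def using finS by simp
    show "\<forall>p\<in>N. (case p of (a, b) \<Rightarrow> (b, a)) \<in> N \<and> (case p of (a, b) \<Rightarrow> (b, a)) \<noteq> p \<and>
      (case (case p of (a, b) \<Rightarrow> (b, a)) of (a, b) \<Rightarrow> (b, a)) = p"
      unfolding N_def S_def using comm by auto
  qed
  ultimately have "odd (card D)" using cS odd by simp
  hence "D \<noteq> {}" by (metis card.empty even_zero)
  then obtain p where "p \<in> D" by blast
  thus ?thesis unfolding D_def S_def by auto
qed

lemma sq_inj:
  assumes fin: "finite Q" and odd: "odd (card Q)"
  shows "inj_on (\<lambda>a. m a a) Q"
proof (rule eq_card_imp_inj_on[OF fin])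
  have "(\<lambda>a. m a a) ` Q = Q" using sq_surj[OF fin odd] cl by force
  thus "card ((\<lambda>a. m a a) ` Q) = card Q" by simp
qed

end

context JL begin
context fixes x assumes xQ: "x \<in> Q" begin

abbreviation "p \<equiv> lpow m e x"

lemma pQ: "p k \<in> Q" by (induction k) (auto simp: e_in cl xQ)
lemma p1: "p 1 = x" by (simp add: rid xQ)
lemma p2: "p 2 = m x x"
proof -
  have "p (Suc (Suc 0)) = m x x" using rid xQ by simp
  thus ?thesis by (simp only: numeral_2_eq_2)
qed
lemma pSuc: "p (Suc k) = m x (p k)" by simp

lemma F1: "m (p 2) (p k) = p (k+2)"
proof (induction k)
  case 0
  have "m (p 2) e = p 2" by (rule rid[OF pQ])
  then show ?case by (simp del: lpow.simps(2) add: numeral_2_eq_2)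
next
  case (Suc k)
  have "m (p 2) (p (Suc k)) = m (m x x) (m (p k) x)" using p2 comm pQ xQ by simp
  also have "\<dots> = m (m (m x x) (p k)) x" using jor xQ pQ by blast
  also have "\<dots> = m x (m (m x x) (p k))" by (intro comm cl xQ pQ)
  also have "\<dots> = m x (p (k+2))" using Suc p2 by simp
  finally show ?case by simp
qed

lemma F2: "m (p 4) (p (2*k)) = p (2*k+4)"
proof (induction k)
  case 0 then show ?case using pQ rid by simp
next
  case (Suc k)
  have p4: "p 4 = m (p 2) (p 2)" using F1[of 2] by simp
  have "m (p 4) (p (2 * Suc k)) = m (p 4) (m (p (2*k)) (p 2))"
    using F1[of "2*k"] comm pQ by (simp add: add.commute)
  also have "\<dots> = m (m (p 4) (p (2*k))) (p 2)" using jor pQ p4 by metis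
  also have "\<dots> = m (p 2) (p (2*k+4))" using Suc comm pQ by simp
  also have "\<dots> = p (2 * Suc k + 4)" using F1[of "2*k+4"] by simp
  finally show ?case .
qed

lemma pcancel: "p (i + d) = p i \<Longrightarrow> p d = e"
proof (induction i)
  case 0 then show ?case by simp
next
  case (Suc i)
  then have "m x (p (i+d)) = m x (p i)" by simp
  hence "p (i+d) = p i" using lcanc xQ pQ by blast
  thus ?case using Suc by blast
qed

lemma period:
  assumes fin: "finite Q"
  shows "\<exists>n>0. p n = e \<and> (\<forall>k. p k = p (k mod n)) \<and> inj_on p {..<n} \<and> n \<le> card Q"
proof -
  have "\<not> inj_on p {..card Q}"
  proof
    assume "inj_on p {..card Q}"
    hence "card (p ` {..card Q}) = Suc (card Q)" by (simp add: card_image)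
    moreover have "card (p ` {..card Q}) \<le> card Q" using pQ fin by (intro card_mono) auto
    ultimately show False by simp
  qed
  then obtain i j where ij: "i \<noteq> j" "p i = p j" unfolding inj_on_def by blast
  have "\<exists>d. 0 < d \<and> p d = e"
  proof (cases "i < j")
    case True
    hence "p (i + (j-i)) = p i" using ij by simp
    hence "p (j-i) = e" by (rule pcancel)
    thus ?thesis using True by (intro exI[of _ "j-i"]) simp
  next
    case False
    hence "p (j + (i-j)) = p j" using ij by simp
    hence "p (i-j) = e" by (rule pcancel)
    thus ?thesis using False ij by (intro exI[of _ "i-j"]) simp
  qed
  define n where "n = (LEAST d. 0 < d \<and> p d = e)"
  have n: "0 < n" "p n = e" using LeastI_ex[OF \<open>\<exists>d. 0 < d \<and> p d = e\<close>] unfolding n_def by auto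
  have nmin: "\<And>d. 0 < d \<Longrightarrow> d < n \<Longrightarrow> p d \<noteq> e" unfolding n_def using not_less_Least by blast
  have add: "p (k + n) = p k" for k by (induction k) (use n in auto)
  have addq: "p (k + n*q) = p k" for k q
  proof (induction q)
    case 0 show ?case by simp
  next
    case (Suc q)
    have "p (k + n * Suc q) = p ((k + n*q) + n)" by (simp add: algebra_simps)
    also have "\<dots> = p (k + n*q)" by (rule add)
    finally show ?case using Suc by simp
  qed
  have md: "p k = p (k mod n)" for k using addq[of "k mod n" "k div n"] by simp
  have inj: "inj_on p {..<n}"
  proof (rule inj_onI)
    fix a b assume a: "a \<in> {..<n}" and b: "b \<in> {..<n}" and eq: "p a = p b"
    show "a = b"
    proof (rule ccontr)
      assume "a \<noteq> b"
      then consider "a < b" | "b < a" by linarith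
      then show False
      proof cases
        case 1
        hence "p (a + (b-a)) = p a" using eq by simp
        hence "p (b-a) = e" by (rule pcancel)
        moreover have "b - a < n" using b by auto
        ultimately show False using nmin[of "b-a"] 1 by auto
      next
        case 2
        hence "p (b + (a-b)) = p b" using eq by simp
        hence "p (a-b) = e" by (rule pcancel)
        moreover have "a - b < n" using a by auto
        ultimately show False using nmin[of "a-b"] 2 by auto
      qed
    qed
  qed
  have "n \<le> card Q"
  proof -
    have "card (p ` {..<n}) = n" using inj by (simp add: card_image)
    moreover have "card (p ` {..<n}) \<le> card Q" using pQ fin by (intro card_mono) auto
    ultimately show ?thesis by simp
  qed
  thus ?thesis using n md inj by blast
qed

end
end

context JL begin

lemma subloopI:
  assumes fin: "finite Q" and H: "H \<subseteq> Q" "e \<in> H" and clH: "\<And>a b. a\<in>H \<Longrightarrow> b\<in>H \<Longrightarrow> m a b \<in> H"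
  shows "subloop Q m e H"
proof -
  have ldiv: "y \<in> H" if a: "a\<in>H" and b: "b\<in>H" and y: "y\<in>Q" and eq: "m a y = b" for a b y
  proof -
    have finH: "finite H" using fin H finite_subset by blast
    have "inj_on (m a) H" using lcanc H a by (auto simp: inj_on_def)
    moreover have "m a ` H \<subseteq> H" using clH a by auto
    ultimately have "m a ` H = H" using finH by (simp add: endo_inj_surj)
    then obtain y' where "y' \<in> H" "m a y' = b" using b by force
    thus ?thesis using lcanc[of a y y'] eq H a y by auto
  qed
  show ?thesis unfolding subloop_def
  proof (intro conjI ballI allI impI)
    show "H \<subseteq> Q" "e \<in> H" by (fact H)+
  next
    fix a b assume "a\<in>H" "b\<in>H" thus "m a b \<in> H" by (rule clH)
  next
    fix a b y assume "a\<in>H" "b\<in>H" "y\<in>Q" "m a y = b" thus "y \<in> H" by (rule ldiv)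
  next
    fix a b y assume "a\<in>H" "b\<in>H" "y\<in>Q" "m y a = b" thus "y \<in> H"
      using ldiv comm H by (metis subsetD)
  qed
qed

context fixes x assumes xQ: "x \<in> Q" begin

abbreviation "P \<equiv> lpow m e x"

declare lpow.simps(2)[simp del]

lemma main:
  assumes fin: "finite Q" and c9: "card Q = 9" and gen: "gen_subloop Q m e x = Q"
  shows "Q = {P k | k. 1 \<le> k \<and> k \<le> 9} \<and> (\<forall>n::nat. P n = P (n mod 9))"
proof -
  obtain n where n: "0 < n" "P n = e" and pm: "\<And>k. P k = P (k mod n)"
    and inj: "inj_on (P) {..<n}" and nle0: "n \<le> card Q"
    using period[OF xQ fin] by blast
  have nle: "n \<le> 9" using nle0 c9 by simp
  have rng: "range (P) = P ` {..<n}"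
    using pm n(1) by (auto simp: image_iff) (metis lessThan_iff mod_less_divisor)
  have cO: "card (range (P)) = n" using rng inj by (simp add: card_image)
  have OQ: "range (P) \<subseteq> Q" using pQ[OF xQ] by auto
  have neq: "P i \<noteq> P j" if "i < n" "j < n" "i \<noteq> j" for i j
    using inj that by (auto simp: inj_on_def)
  have F1': "m (P 2) (P k) = P (k+2)" for k by (rule F1[OF xQ])
  have F2': "m (P 4) (P (2*k)) = P (2*k+4)" for k by (rule F2[OF xQ])
  have P1: "m (P 1) (P k) = P (k+1)" for k using xQ by (simp add: rid lpow.simps)
  have P0: "m (P 0) (P k) = P k" for k using lid pQ[OF xQ] by simp
  have cm: "m (P i) (P j) = m (P j) (P i)" for i j using comm pQ[OF xQ] by blast
  have small: False if clo: "\<And>i j. i < n \<Longrightarrow> j < n \<Longrightarrow> m (P i) (P j) \<in> range (P)" and nl: "n < 9"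
  proof -
    have "subloop Q m e (range (P))"
    proof (rule subloopI[OF fin OQ])
      show "e \<in> range (P)" using rangeI[of "P" 0] by simp
      fix a b assume "a \<in> range (P)" "b \<in> range (P)"
      then obtain i j where "a = P i" "b = P j" by blast
      hence "a = P (i mod n)" "b = P (j mod n)" using pm by auto
      thus "m a b \<in> range (P)" using clo n(1) by simp
    qed
    moreover have "x \<in> range (P)" by (metis rangeI p1[OF xQ])
    ultimately have "Q \<subseteq> range (P)" using gen unfolding gen_subloop_def by blast
    hence "card Q \<le> n" using cO card_mono[OF finite_subset[OF OQ fin]] by (metis finite_imageI finite_lessThan rng)
    thus False using c9 nl by simp
  qed
  have sqi: "inj_on (\<lambda>a. m a a) Q" using sq_inj fin c9 by simp
  have sqc: False if "m a a = m b b" "a \<in> Q" "b \<in> Q" "a \<noteq> b" for a b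
    using sqi that by (auto simp: inj_on_def)
  have p44: "m (P 4) (P 4) = P 8" using F2'[of 2] by simp
  have ee: "m e e = e" using lid e_in by simp
  have "n = 9"
  proof (rule ccontr)
    assume "n \<noteq> 9"
    hence "n = 1 \<or> n = 2 \<or> n = 3 \<or> n = 4 \<or> n = 5 \<or> n = 6 \<or> n = 7 \<or> n = 8" using n(1) nle by linarith
    then show False
    proof (elim disjE)
      assume n1: "n = 1"
      have pe: "P k = e" for k using pm[of k] n1 by simp
      show False
      proof (rule small)
        fix i j
        have "m (P i) (P j) = P 0" using pe ee by simp
        thus "m (P i) (P j) \<in> range P" by (metis rangeI)
      qed (simp add: n1)
    next
      assume n2: "n = 2"
      have "m (P 1) (P 1) = P 2" using p1[OF xQ] p2[OF xQ] by simp
      also have "\<dots> = m e e" using pm[of 2] n2 ee by simp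
      finally have "m (P 1) (P 1) = m e e" .
      thus False using sqc[of "P 1" e] neq[of 1 0] n2 pQ[OF xQ] e_in by simp
    next
      assume n3: "n = 3"
      show False
      proof (rule small)
        fix i j assume "i < n" "j < n"
        hence "i = 0 \<or> i = 1 \<or> i = 2" using n3 by auto
        thus "m (P i) (P j) \<in> range (P)" using P0 P1 F1' by auto
      qed (simp add: n3)
    next
      assume n4: "n = 4"
      have "m (P 2) (P 2) = m e e" using F1'[of 2] pm[of 4] n4 ee by simp
      thus False using sqc[of "P 2" e] neq[of 2 0] n4 pQ[OF xQ] e_in by simp
    next
      assume n5: "n = 5"
      have r: "P 8 = P 3" "P 6 = P 1" "P 12 = P 2" using pm[of 8] pm[of 6] pm[of 12] n5 by auto
      have q0: "m (P 4) (P 0) = P 4" using F2'[of 0] by simp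
      have q1: "m (P 4) (P 1) = P 0" using F2'[of 3] r pm[of 10] n5 by simp
      have q2: "m (P 4) (P 2) = P 1" using F2'[of 1] r by simp
      have q3: "m (P 4) (P 3) = P 2" using F2'[of 4] r by simp
      have q4: "m (P 4) (P 4) = P 3" using F2'[of 2] r by simp
      have "m (P 3) (P 3) = m (P 4) (m (P 3) (P 4))"
        using jor2[of "P 4" "P 4"] pQ[OF xQ] p44 r by simp
      hence q33: "m (P 3) (P 3) = P 1" using q3 q2 cm by metis
      show False
      proof (rule small)
        fix i j assume "i < n" "j < n"
        hence i: "i = 0 \<or> i = 1 \<or> i = 2 \<or> i = 3 \<or> i = 4" and j: "j = 0 \<or> j = 1 \<or> j = 2 \<or> j = 3 \<or> j = 4" using n5 by auto
        have r0: "m (P 0) (P k) \<in> range P" for k using P0[of k] by (metis rangeI)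
        have r1: "m (P 1) (P k) \<in> range P" for k using P1[of k] by (metis rangeI)
        have r2: "m (P 2) (P k) \<in> range P" for k using F1'[of k] by (metis rangeI)
        have r4: "m (P 4) (P j) \<in> range P"
        proof -
          consider "j = 0" | "j = 1" | "j = 2" | "j = 3" | "j = 4" using j by blast
          then show ?thesis
          proof cases
            case 1 then show ?thesis using q0 by (metis rangeI)
          next
            case 2 then show ?thesis using q1 by (metis rangeI)
          next
            case 3 then show ?thesis using q2 by (metis rangeI)
          next
            case 4 then show ?thesis using q3 by (metis rangeI)
          next
            case 5 then show ?thesis using q4 by (metis rangeI)
          qed
        qed
        have r3: "m (P 3) (P j) \<in> range P"
        proof -
          consider "j = 0" | "j = 1" | "j = 2" | "j = 3" | "j = 4" using j by blast
          then show ?thesis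
          proof cases
            case 1 then show ?thesis using r0[of 3] cm[of 3 0] by simp
          next
            case 2 then show ?thesis using r1[of 3] cm[of 3 1] by simp
          next
            case 3 then show ?thesis using r2[of 3] cm[of 3 2] by simp
          next
            case 4 then show ?thesis using q33 by (metis rangeI)
          next
            case 5 then show ?thesis using q3 cm[of 3 4] by (metis rangeI)
          qed
        qed
        consider "i = 0" | "i = 1" | "i = 2" | "i = 3" | "i = 4" using i by blast
        then show "m (P i) (P j) \<in> range (P)"
          by cases (use r0 r1 r2 r3 r4 in simp_all)
      qed (simp add: n5)
    next
      assume n6: "n = 6"
      have "m (P 4) (P 4) = m x x" using p44 pm[of 8] n6 p2[OF xQ] by simp
      thus False using sqc[of "P 4" x] neq[of 4 1] n6 pQ[OF xQ] xQ p1[OF xQ] e_in by simp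
    next
      assume n7: "n = 7"
      have "range (P) \<noteq> Q" using cO c9 n7 by auto
      then obtain q where q: "q \<in> Q" "q \<notin> range (P)" using OQ by blast
      have a1: "m x q \<notin> range (P)"
      proof
        assume "m x q \<in> range (P)"
        then obtain k where "m x q = P k" by blast
        also have "\<dots> = P (k + 7)" using pm[of k] pm[of "k+7"] n7 by simp
        also have "\<dots> = m x (P (k+6))"
        proof -
          have "k + 7 = Suc (k + 6)" by simp
          thus ?thesis by (simp only: lpow.simps(2))
        qed
        finally have "q = P (k+6)" using lcanc xQ q pQ[OF xQ] by blast
        thus False using q by auto
      qed
      have a2: "m (P 2) q \<notin> range (P)"
      proof
        assume "m (P 2) q \<in> range (P)"
        then obtain k where "m (P 2) q = P k" by blast
        also have "\<dots> = P (k + 7)" using pm[of k] pm[of "k+7"] n7 by simp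
        also have "\<dots> = m (P 2) (P (k+5))" using F1'[of "k+5"] by (simp add: add.commute)
        finally have "q = P (k+5)" using lcanc pQ[OF xQ] q by blast
        thus False using q by auto
      qed
      have d1: "m x q \<noteq> q"
      proof
        assume "m x q = q" hence "m x q = m e q" using lid q by simp
        hence "x = e" using rcanc xQ e_in q by blast
        thus False using neq[of 1 0] n7 p1[OF xQ] by simp
      qed
      have d2: "m (P 2) q \<noteq> q"
      proof
        assume "m (P 2) q = q" hence "m (P 2) q = m e q" using lid q by simp
        hence "P 2 = e" using rcanc pQ[OF xQ] e_in q by blast
        thus False using neq[of 2 0] n7 by simp
      qed
      have d3: "m x q \<noteq> m (P 2) q"
      proof
        assume "m x q = m (P 2) q"
        hence "x = P 2" using rcanc xQ pQ[OF xQ] q by blast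
        thus False using neq[of 1 2] n7 p1[OF xQ] by simp
      qed
      have sub: "{q, m x q, m (P 2) q} \<subseteq> Q - range (P)"
        using q a1 a2 cl xQ pQ[OF xQ] by auto
      have "card {q, m x q, m (P 2) q} = 3" using d1 d2 d3 by auto
      moreover have "card (Q - range (P)) = 2"
        using card_Diff_subset[OF finite_subset[OF OQ fin] OQ] cO c9 n7 by simp
      ultimately show False using card_mono[OF _ sub] fin by simp
    next
      assume n8: "n = 8"
      have "m (P 4) (P 4) = m e e" using p44 pm[of 8] n8 ee by simp
      thus False using sqc[of "P 4" e] neq[of 4 0] n8 pQ[OF xQ] e_in by simp
    qed
  qed
  have O9: "P ` {..<9} = Q"
  proof -
    have "range P = Q" using card_subset_eq[OF fin OQ] cO c9 \<open>n = 9\<close> by simp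
    thus ?thesis using rng \<open>n = 9\<close> by simp
  qed
  have "{P k | k. 1 \<le> k \<and> k \<le> 9} = P ` {..<9}"
  proof
    show "{P k | k. 1 \<le> k \<and> k \<le> 9} \<subseteq> P ` {..<9}"
      using pm \<open>n = 9\<close> by auto (metis lessThan_iff mod_less_divisor zero_less_numeral image_eqI)
    show "P ` {..<9} \<subseteq> {P k | k. 1 \<le> k \<and> k \<le> 9}"
    proof
      fix y assume "y \<in> P ` {..<9}"
      then obtain k where k: "k < 9" "y = P k" by blast
      show "y \<in> {P k | k. 1 \<le> k \<and> k \<le> 9}"
      proof (cases "k = 0")
        case True
        hence "y = P 9" using k n \<open>n = 9\<close> by simp
        thus ?thesis by auto
      next
        case False thus ?thesis using k by auto
      qed
    qed
  qed
  thus ?thesis using O9 pm \<open>n = 9\<close> by auto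
qed

end
end

theorem lemma3p7:
  fixes Q :: "'a set" and m :: "'a \<Rightarrow> 'a \<Rightarrow> 'a" and e x :: 'a
  assumes "jordan_loop Q m e"
    and "finite Q" and "card Q = 9"
    and "x \<in> Q"
    and "gen_subloop Q m e x = Q"
  shows "Q = {lpow m e x k | k. 1 \<le> k \<and> k \<le> 9}
         \<and> (\<forall>n::nat. lpow m e x n = lpow m e x (n mod 9))"
proof -
  interpret JL Q m e using assms(1) by unfold_locales
  show ?thesis using main[OF assms(4) assms(2,3,5)] by simp
qed

end
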